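(* Let $n\geq 2$ and let $X=[1+ij]_{i,j=1}^n$. Then $X=ZDZ^T$, where \[ Z=\Big[L_n\Big(\tfrac{n+1}{n}\Big)L_{n-1}\Big(\tfrac{n}{n-1}\Big)\cdots L_2\Big(\tfrac{3}{2}\Big)\Big]\Big[L_n\Big(\tfrac{n-1}{n}\Big)L_{n-1}\Big(\tfrac{n-2}{n-1}\Big)\cdots L_3\Big(\tfrac{2}{3}\Big)\Big] \] and $D$ is the $n\times n$ diagonal matrix with $D_{11}=2$, $D_{22}=\tfrac12$, and $D_{kk}=0$ for $3\leq k\leq n$.
   Context: For a real number $s$ and $2\leq i\leq n$, $L_i(s)$ denotes the $n\times n$ matrix with all diagonal entries equal to $1$, $(i,i-1)$ entry equal to $s$, and all other entries zero. An empty product (when $n=2$) is the identity matrix. *)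

theory Defs
  imports "Jordan_Normal_Form.Matrix"
begin

text \<open>Matrices are Jordan_Normal_Form matrices, whose entries are indexed from 0.
  The paper's 1-based entry (i,j) is entry (i-1,j-1) here.\<close>

text \<open>L i s (of size n): ones on the diagonal, s at the paper's (i,i-1) entry,
  i.e. at 0-based position (i-1, i-2); zero elsewhere.\<close>
definition Lmat :: "nat \<Rightarrow> nat \<Rightarrow> real \<Rightarrow> real mat" where
  "Lmat n i s = mat n n (\<lambda>(r, c). if r = c then 1 else if r = i - 1 \<and> c = i - 2 then s else 0)"

text \<open>Ordered product L_{hi}(f hi) * L_{hi-1}(f (hi-1)) * ... * L_{lo}(f lo);
  the empty product (hi < lo) is the identity.\<close>
definition Lprod :: "nat \<Rightarrow> nat \<Rightarrow> nat \<Rightarrow> (nat \<Rightarrow> real) \<Rightarrow> real mat" where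
  "Lprod n hi lo f = foldr (\<lambda>k M. Lmat n k (f k) * M) (rev [lo..<Suc hi]) (1\<^sub>m n)"

definition Xmat :: "nat \<Rightarrow> real mat" where
  "Xmat n = mat n n (\<lambda>(i, j). 1 + real (i + 1) * real (j + 1))"

definition Zmat :: "nat \<Rightarrow> real mat" where
  "Zmat n = Lprod n n 2 (\<lambda>k. real (k + 1) / real k) * Lprod n n 3 (\<lambda>k. (real k - 1) / real k)"

definition Dmat :: "nat \<Rightarrow> real mat" where
  "Dmat n = mat n n (\<lambda>(i, j). if i = j then (if i = 0 then 2 else if i = 1 then 1/2 else 0) else 0)"

end

theory Submission imports Defs begin

lemma Lmat_carrier: "Lmat n i s \<in> carrier_mat n n" by (simp add: Lmat_def)

lemma Lprod_carrier: "Lprod n hi lo f \<in> carrier_mat n n"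
proof -
  have "\<And>xs. foldr (\<lambda>k M. Lmat n k (f k) * M) xs (1\<^sub>m n) \<in> carrier_mat n n"
  proof -
    fix xs show "foldr (\<lambda>k M. Lmat n k (f k) * M) xs (1\<^sub>m n) \<in> carrier_mat n n"
      by (induction xs) (auto simp: Lmat_def)
  qed
  then show ?thesis by (simp add: Lprod_def)
qed

lemma Lmat_mult_entry:
  assumes "M \<in> carrier_mat n n" "2 \<le> h" "h \<le> n" "r < n" "c < n"
  shows "(Lmat n h s * M) $$ (r,c) = M $$ (r,c) + (if r = h - 1 then s * M $$ (h-2, c) else 0)"
proof -
  have "(Lmat n h s * M) $$ (r,c) = (\<Sum>k\<in>{0..<n}. Lmat n h s $$ (r,k) * M $$ (k,c))"
    using assms by (simp add: Lmat_def scalar_prod_def)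
  also have "\<dots> = (\<Sum>k\<in>{0..<n}. (if k = r then M $$ (k,c) else 0) + (if r = h - 1 \<and> k = h - 2 then s * M $$ (k,c) else 0))"
    by (rule sum.cong) (use assms in \<open>auto simp: Lmat_def\<close>)
  also have "\<dots> = M $$ (r,c) + (if r = h - 1 then s * M $$ (h-2, c) else 0)"
    using assms by (simp add: sum.distrib sum.delta)
  finally show ?thesis .
qed

lemma Lprod_entry:
  assumes "2 \<le> lo" "hi \<le> n" "r < n" "c < n"
  shows "Lprod n hi lo f $$ (r,c) = (if r = c then 1 else if c < r \<and> lo \<le> c+2 \<and> r+1 \<le> hi then (\<Prod>k\<in>{c+2..r+1}. f k) else 0)"
  using assms
proof (induction hi arbitrary: r c)
  case 0
  then show ?case by (simp add: Lprod_def)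
next
  case (Suc hi)
  show ?case
  proof (cases "lo \<le> Suc hi")
    case False
    then have "Lprod n (Suc hi) lo f = 1\<^sub>m n" by (simp add: Lprod_def)
    then show ?thesis using Suc.prems False by auto
  next
    case True
    have eq: "Lprod n (Suc hi) lo f = Lmat n (Suc hi) (f (Suc hi)) * Lprod n hi lo f"
      using True by (simp add: Lprod_def)
    have IH: "\<And>r c. r < n \<Longrightarrow> c < n \<Longrightarrow> Lprod n hi lo f $$ (r,c) = (if r = c then 1 else if c < r \<and> lo \<le> c+2 \<and> r+1 \<le> hi then (\<Prod>k\<in>{c+2..r+1}. f k) else 0)"
      using Suc.IH Suc.prems by auto
    have e: "Lprod n (Suc hi) lo f $$ (r,c) = Lprod n hi lo f $$ (r,c) + (if r = hi then f (Suc hi) * Lprod n hi lo f $$ (hi-1, c) else 0)"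
      unfolding eq using Lmat_mult_entry[OF Lprod_carrier, of "Suc hi" n r c "f (Suc hi)" hi lo f] Suc.prems True
      by simp
    show ?thesis
    proof (cases "r = hi")
      case False
      then show ?thesis using e IH Suc.prems by auto
    next
      case rh: True
      have hi1: "hi \<ge> 1" using True Suc.prems by simp
      show ?thesis
      proof (cases "c < hi")
        case False
        then show ?thesis using e IH Suc.prems rh hi1 by auto
      next
        case ch: True
        have p: "(\<Prod>k\<in>{c+2..hi+1}. f k) = f (Suc hi) * (\<Prod>k\<in>{c+2..hi}. f k)"
          using ch hi1 by (subst prod.nat_ivl_Suc'[symmetric]) auto
        have "c + 2 \<le> hi \<or> c + 1 = hi" using ch by auto
        then show ?thesis
        proof
          assume "c + 2 \<le> hi"
          then show ?thesis using e IH[of "hi - 1" c] IH[of hi c] Suc.prems rh ch hi1 p by (auto simp: Suc_diff_1)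
        next
          assume "c + 1 = hi"
          then show ?thesis using e IH[of "hi - 1" c] IH[of hi c] Suc.prems rh ch hi1 True by auto
        qed
      qed
    qed
  qed
qed

lemma aux1: "(a::real) \<ge> 1 \<Longrightarrow> (m::real) \<ge> 0 \<Longrightarrow> (m+2)/(m+1) * ((m+1)/a) = (m+2)/a"
  by simp

lemma aux3: "(x::real) \<ge> 0 \<Longrightarrow> 1/2 - 1/(x+2) + 1/((x+2)*(x+3)) = 1/2 - 1/(x+3)"
  by (smt (verit, ccfv_threshold) diff_frac_eq divide_cancel_left nonzero_divide_mult_cancel_left)

lemma tel1: "1 \<le> a \<Longrightarrow> a \<le> m + 1 \<Longrightarrow> (\<Prod>k\<in>{a..m}. real (k+1) / real k) = real (m+1) / real a"
proof (induction m)
  case 0 then show ?case by auto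
next
  case (Suc m)
  show ?case
  proof (cases "a = Suc m + 1")
    case True then show ?thesis by simp
  next
    case False
    then have a: "a \<le> m + 1" using Suc.prems by simp
    have "(\<Prod>k\<in>{a..Suc m}. real (k+1) / real k) = real (Suc m+1) / real (Suc m) * (\<Prod>k\<in>{a..m}. real (k+1) / real k)"
      using a by (subst prod.nat_ivl_Suc') auto
    also have "\<dots> = real (Suc m+1) / real (Suc m) * (real (m+1) / real a)" using Suc.IH Suc.prems a by simp
    also have "\<dots> = real (Suc m + 1) / real a" using Suc.prems aux1[of "real a" "real m"] by (simp add: add.commute)
    finally show ?thesis .
  qed
qed

lemma tel2: "1 \<le> a \<Longrightarrow> a \<le> m + 1 \<Longrightarrow> 1 \<le> m \<Longrightarrow> (\<Prod>k\<in>{a..m}. (real k - 1) / real k) = (real a - 1) / real m"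
proof (induction m)
  case 0 then show ?case by auto
next
  case (Suc m)
  show ?case
  proof (cases "a = Suc m + 1")
    case True then show ?thesis by simp
  next
    case False
    then have a: "a \<le> m + 1" using Suc.prems by simp
    show ?thesis
    proof (cases "m = 0")
      case True then show ?thesis using a Suc.prems by auto
    next
      case False
      then show ?thesis using Suc a by (simp add: prod.nat_ivl_Suc' field_simps)
    qed
  qed
qed

lemma sum_step: "(\<Sum>k\<in>{1..Suc r}. g k) = (\<Sum>k\<in>{1..r}. g k) + (g (Suc r) :: real)"
  by (simp add: sum.cl_ivl_Suc)

lemma tel3: "(\<Sum>k\<in>{1..r}. 1 / (real (k+1) * real (k+2))) = 1/2 - 1 / real (r+2)"
proof (induction r)
  case 0 then show ?case by simp
next
  case (Suc r)
  show ?case unfolding sum_step Suc.IH using aux3[of "real r"] by (simp add: add.commute)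
qed

definition "PP n = Lprod n n 2 (\<lambda>k. real (k + 1) / real k)"
definition "QQ n = Lprod n n 3 (\<lambda>k. (real k - 1) / real k)"

lemma Lprod_dims[simp]: "dim_row (Lprod n hi lo f) = n" "dim_col (Lprod n hi lo f) = n"
  using Lprod_carrier[of n hi lo f] by auto

lemma PP_entry: "r < n \<Longrightarrow> c < n \<Longrightarrow> PP n $$ (r,c) = (if c \<le> r then real (r+2) / real (c+2) else 0)"
  unfolding PP_def using tel1[of "c+2" "r+1"] by (subst Lprod_entry) auto

lemma QQ0: "r < n \<Longrightarrow> 0 < n \<Longrightarrow> QQ n $$ (r,0) = (if r = 0 then 1 else 0)"
  unfolding QQ_def by (subst Lprod_entry) auto

lemma QQ1: "r < n \<Longrightarrow> 1 < n \<Longrightarrow> QQ n $$ (r,1) = (if 1 \<le> r then 2 / real (r+1) else 0)"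
  unfolding QQ_def by (subst Lprod_entry) (auto simp: tel2)

lemma Z0: assumes "r < n" "1 < n" shows "Zmat n $$ (r,0) = real (r+2) / 2"
proof -
  have "Zmat n $$ (r,0) = (\<Sum>k\<in>{0..<n}. PP n $$ (r,k) * QQ n $$ (k,0))"
    using assms Lprod_carrier[of n] by (simp add: Zmat_def PP_def QQ_def scalar_prod_def)
  also have "\<dots> = (\<Sum>k\<in>{0..<n}. if k = 0 then PP n $$ (r,0) else 0)"
    by (rule sum.cong) (use assms in \<open>auto simp: QQ0\<close>)
  also have "\<dots> = real (r+2) / 2" using assms by (simp add: PP_entry)
  finally show ?thesis .
qed

lemma Z1: assumes "r < n" "1 < n" shows "Zmat n $$ (r,1) = real r"
proof -
  have "Zmat n $$ (r,1) = (\<Sum>k\<in>{0..<n}. PP n $$ (r,k) * QQ n $$ (k,1))"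
    using assms Lprod_carrier[of n] by (simp add: Zmat_def PP_def QQ_def scalar_prod_def)
  also have "\<dots> = (\<Sum>k\<in>{0..<n}. if 1 \<le> k \<and> k \<le> r then 2 * real (r+2) * (1 / (real (k+1) * real (k+2))) else 0)"
  proof (rule sum.cong)
    fix k assume "k \<in> {0..<n}"
    then have k: "k < n" by simp
    show "PP n $$ (r,k) * QQ n $$ (k,1) = (if 1 \<le> k \<and> k \<le> r then 2 * real (r+2) * (1 / (real (k+1) * real (k+2))) else 0)"
      using QQ1[OF k assms(2)] PP_entry[OF assms(1) k] by (auto simp: field_split_simps)
  qed simp
  also have "\<dots> = (\<Sum>k\<in>{k\<in>{0..<n}. 1 \<le> k \<and> k \<le> r}. 2 * real (r+2) * (1 / (real (k+1) * real (k+2))))"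
    by (rule sum.inter_filter[symmetric]) simp
  also have "{k\<in>{0..<n}. 1 \<le> k \<and> k \<le> r} = {1..r}" using assms by auto
  also have "(\<Sum>k\<in>{1..r}. 2 * real (r+2) * (1 / (real (k+1) * real (k+2)))) = real r"
  proof -
    have "(\<Sum>k\<in>{1..r}. 2 * real (r+2) * (1 / (real (k+1) * real (k+2)))) = 2 * real (r+2) * (\<Sum>k\<in>{1..r}. 1 / (real (k+1) * real (k+2)))"
      by (rule sum_distrib_left[symmetric])
    also have "\<dots> = 2 * real (r+2) * (1/2 - 1 / real (r+2))" by (simp only: tel3)
    also have "\<dots> = real r" by (simp add: field_simps)
    finally show ?thesis .
  qed
  finally show ?thesis .
qed

lemma Zcar: "Zmat n \<in> carrier_mat n n"
  unfolding Zmat_def using Lprod_carrier by (metis mult_carrier_mat)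

theorem corollary2p3:
  fixes n :: nat
  assumes "n \<ge> 2"
  shows "Xmat n = Zmat n * Dmat n * transpose_mat (Zmat n)"
proof (rule eq_matI)
  show "dim_row (Xmat n) = dim_row (Zmat n * Dmat n * transpose_mat (Zmat n))"
    using Zcar[of n] by (simp add: Xmat_def)
  show "dim_col (Xmat n) = dim_col (Zmat n * Dmat n * transpose_mat (Zmat n))"
    using Zcar[of n] by (simp add: Xmat_def)
  fix i j assume ij: "i < dim_row (Zmat n * Dmat n * transpose_mat (Zmat n))"
    "j < dim_col (Zmat n * Dmat n * transpose_mat (Zmat n))"
  then have i: "i < n" and j: "j < n" using Zcar[of n] by auto
  define d where "d = (\<lambda>k::nat. if k = 0 then (2::real) else if k = 1 then 1/2 else 0)"
  have ZD: "(Zmat n * Dmat n) $$ (i,k) = Zmat n $$ (i,k) * d k" if i: "i < n" and k: "k < n" for i k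
  proof -
    have "(Zmat n * Dmat n) $$ (i,k) = (\<Sum>l\<in>{0..<n}. Zmat n $$ (i,l) * Dmat n $$ (l,k))"
      using Zcar[of n] i k by (simp add: scalar_prod_def Dmat_def)
    also have "\<dots> = (\<Sum>l\<in>{0..<n}. if l = k then Zmat n $$ (i,k) * d k else 0)"
      by (rule sum.cong) (use k in \<open>auto simp: Dmat_def d_def\<close>)
    also have "\<dots> = Zmat n $$ (i,k) * d k" using k by simp
    finally show ?thesis .
  qed
  have "(Zmat n * Dmat n * transpose_mat (Zmat n)) $$ (i,j) = (\<Sum>k\<in>{0..<n}. (Zmat n * Dmat n) $$ (i,k) * Zmat n $$ (j,k))"
    using Zcar[of n] i j by (simp add: scalar_prod_def Dmat_def)
  also have "\<dots> = (\<Sum>k\<in>{0..<n}. (if k = 0 then Zmat n $$ (i,0) * 2 * Zmat n $$ (j,0) else 0) + (if k = 1 then Zmat n $$ (i,1) * (1/2) * Zmat n $$ (j,1) else 0))"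
    by (rule sum.cong) (auto simp: ZD[OF i] d_def)
  also have "\<dots> = Zmat n $$ (i,0) * 2 * Zmat n $$ (j,0) + Zmat n $$ (i,1) * (1/2) * Zmat n $$ (j,1)"
    using assms by (simp add: sum.distrib)
  also have "\<dots> = real (i+2) / 2 * 2 * (real (j+2) / 2) + real i * (1/2) * real j"
    using assms i j Z1[of i n] Z1[of j n] Z0[of i n] Z0[of j n] by (simp only: One_nat_def)
  also have "\<dots> = Xmat n $$ (i,j)"
    using i j by (simp add: Xmat_def field_simps)
  finally show "Xmat n $$ (i,j) = (Zmat n * Dmat n * transpose_mat (Zmat n)) $$ (i,j)" by simp
qed
end
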